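(* Let $G$ be a group and let $x_1,x_2,x_3,g_1,g_2,g_3\in G$ be such that $$1=[x_1,x_2,x_3]=[x_1g_1,x_2g_2,x_3g_3]=[x_1g_1,x_2g_2,x_3]=[x_1g_1,x_2,x_3g_2]$$ $$=[x_1g_1,x_2,x_3]=[x_1g_1,x_2,x_3g_3]=[x_1,x_2,x_3g_1]=[x_1,x_2g_2,x_3g_1]$$ $$=[x_1,x_2g_2,x_3]=[x_1,x_2,x_3g_2]=[x_1,x_2g_2,x_3g_3]=[x_1,x_2,x_3g_3].$$ Then $[g_1,g_2,g_3]=1$.
   Context: Commutators: $[x,y]=x^{-1}y^{-1}xy$ and $[x,y,z]=[[x,y],z]$. *)

theory Defs
  imports "HOL-Algebra.Group"
begin

definition comm :: "('a, 'b) monoid_scheme \<Rightarrow> 'a \<Rightarrow> 'a \<Rightarrow> 'a" where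
  "comm G x y = inv\<^bsub>G\<^esub> x \<otimes>\<^bsub>G\<^esub> inv\<^bsub>G\<^esub> y \<otimes>\<^bsub>G\<^esub> x \<otimes>\<^bsub>G\<^esub> y"

definition comm3 :: "('a, 'b) monoid_scheme \<Rightarrow> 'a \<Rightarrow> 'a \<Rightarrow> 'a \<Rightarrow> 'a" where
  "comm3 G x y z = comm G (comm G x y) z"

end

theory Submission
  imports Defs
begin

context group begin
lemma cancel1[simp]: "x \<in> carrier G \<Longrightarrow> y \<in> carrier G \<Longrightarrow> x \<otimes> (inv x \<otimes> y) = y"
  by (simp add: m_assoc[symmetric])
lemma cancel2[simp]: "x \<in> carrier G \<Longrightarrow> y \<in> carrier G \<Longrightarrow> inv x \<otimes> (x \<otimes> y) = y"
  by (simp add: m_assoc[symmetric])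
lemma cm_eq: "x \<in> carrier G \<Longrightarrow> y \<in> carrier G \<Longrightarrow> comm G x y = \<one> \<longleftrightarrow> x \<otimes> y = y \<otimes> x"
  unfolding comm_def
  by (metis inv_closed m_assoc m_closed inv_comm r_inv l_inv r_one l_one group.inv_equality is_group inv_mult_group)
lemma L2: "a \<in> carrier G \<Longrightarrow> b \<in> carrier G \<Longrightarrow> g \<in> carrier G \<Longrightarrow>
  comm G (a \<otimes> g) b = (inv g \<otimes> comm G a b \<otimes> g) \<otimes> comm G g b"
  unfolding comm_def by (simp add: m_assoc inv_mult_group r_inv_ex) 
lemma L3: "a \<in> carrier G \<Longrightarrow> b \<in> carrier G \<Longrightarrow> g \<in> carrier G \<Longrightarrow>
  comm G a (b \<otimes> g) = comm G a g \<otimes> (inv g \<otimes> comm G a b \<otimes> g)"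
  unfolding comm_def by (simp add: m_assoc inv_mult_group)

lemma lcan: "x \<in> carrier G \<Longrightarrow> y \<in> carrier G \<Longrightarrow> z \<in> carrier G \<Longrightarrow> x \<otimes> y = x \<otimes> z \<Longrightarrow> y = z"
  by (metis cancel2)
lemma L1: "y \<in> carrier G \<Longrightarrow> c \<in> carrier G \<Longrightarrow> g \<in> carrier G \<Longrightarrow> y \<otimes> c = c \<otimes> y
  \<Longrightarrow> y \<otimes> (c \<otimes> g) = (c \<otimes> g) \<otimes> y \<Longrightarrow> y \<otimes> g = g \<otimes> y"
  by (metis m_assoc m_closed lcan)
lemma conj_id: "y \<in> carrier G \<Longrightarrow> g \<in> carrier G \<Longrightarrow> y \<otimes> g = g \<otimes> y \<Longrightarrow> inv g \<otimes> y \<otimes> g = y"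
  by (simp add: m_assoc)
lemma cw_mult: "y \<in> carrier G \<Longrightarrow> z \<in> carrier G \<Longrightarrow> g \<in> carrier G \<Longrightarrow> y \<otimes> g = g \<otimes> y \<Longrightarrow> z \<otimes> g = g \<otimes> z
  \<Longrightarrow> (y \<otimes> z) \<otimes> g = g \<otimes> (y \<otimes> z)"
  by (metis m_assoc)
lemma cw_right: "y \<in> carrier G \<Longrightarrow> z \<in> carrier G \<Longrightarrow> g \<in> carrier G \<Longrightarrow> y \<otimes> g = g \<otimes> y \<Longrightarrow> (y \<otimes> z) \<otimes> g = g \<otimes> (y \<otimes> z)
  \<Longrightarrow> z \<otimes> g = g \<otimes> z"
  by (metis m_assoc m_closed lcan)
lemma cw_left: "y \<in> carrier G \<Longrightarrow> z \<in> carrier G \<Longrightarrow> g \<in> carrier G \<Longrightarrow> z \<otimes> g = g \<otimes> z \<Longrightarrow> (y \<otimes> z) \<otimes> g = g \<otimes> (y \<otimes> z)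
  \<Longrightarrow> y \<otimes> g = g \<otimes> y"
  by (metis m_assoc m_closed right_cancel)
lemma comm_closed[simp]: "x \<in> carrier G \<Longrightarrow> y \<in> carrier G \<Longrightarrow> comm G x y \<in> carrier G"
  unfolding comm_def by simp
lemma c3: "a \<in> carrier G \<Longrightarrow> b \<in> carrier G \<Longrightarrow> c \<in> carrier G \<Longrightarrow>
  comm3 G a b c = \<one> \<longleftrightarrow> comm G a b \<otimes> c = c \<otimes> comm G a b"
  unfolding comm3_def by (simp add: cm_eq)
end

theorem lemma2p1:
  fixes G (structure)
  assumes "group G"
    and "x1 \<in> carrier G" "x2 \<in> carrier G" "x3 \<in> carrier G"
    and "g1 \<in> carrier G" "g2 \<in> carrier G" "g3 \<in> carrier G"
    and "comm3 G x1 x2 x3 = \<one>"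
    and "comm3 G (x1 \<otimes> g1) (x2 \<otimes> g2) (x3 \<otimes> g3) = \<one>"
    and "comm3 G (x1 \<otimes> g1) (x2 \<otimes> g2) x3 = \<one>"
    and "comm3 G (x1 \<otimes> g1) x2 (x3 \<otimes> g2) = \<one>"
    and "comm3 G (x1 \<otimes> g1) x2 x3 = \<one>"
    and "comm3 G (x1 \<otimes> g1) x2 (x3 \<otimes> g3) = \<one>"
    and "comm3 G x1 x2 (x3 \<otimes> g1) = \<one>"
    and "comm3 G x1 (x2 \<otimes> g2) (x3 \<otimes> g1) = \<one>"
    and "comm3 G x1 (x2 \<otimes> g2) x3 = \<one>"
    and "comm3 G x1 x2 (x3 \<otimes> g2) = \<one>"
    and "comm3 G x1 (x2 \<otimes> g2) (x3 \<otimes> g3) = \<one>"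
    and "comm3 G x1 x2 (x3 \<otimes> g3) = \<one>"
  shows "comm3 G g1 g2 g3 = \<one>"
proof -
  interpret group G by fact
  note C = assms(2-7)
  have h: "comm G a b \<otimes> c = c \<otimes> comm G a b" if "comm3 G a b c = \<one>" "a \<in> carrier G" "b \<in> carrier G" "c \<in> carrier G" for a b c
    using that c3 by blast
  define u where "u = comm G x1 x2"
  define v where "v = comm G g1 x2"
  define w where "w = comm G x1 g2"
  have uc: "u \<in> carrier G" "v \<in> carrier G" "w \<in> carrier G" using C by (auto simp: u_def v_def w_def)
  have u0: "u \<otimes> x3 = x3 \<otimes> u" using h[OF assms(8)] C u_def by simp
  have u1: "u \<otimes> g1 = g1 \<otimes> u" by (rule L1[OF uc(1) _ _ u0]) (use h[OF assms(14)] C u_def in simp_all)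
  have u2: "u \<otimes> g2 = g2 \<otimes> u" by (rule L1[OF uc(1) _ _ u0]) (use h[OF assms(17)] C u_def in simp_all)
  have u3: "u \<otimes> g3 = g3 \<otimes> u" by (rule L1[OF uc(1) _ _ u0]) (use h[OF assms(19)] C u_def in simp_all)
  have P: "comm G (x1 \<otimes> g1) x2 = u \<otimes> v"
    using L2[of x1 x2 g1] conj_id[OF uc(1) _ u1] C by (simp add: u_def v_def)
  have Q: "comm G x1 (x2 \<otimes> g2) = w \<otimes> u"
    using L3[of x1 x2 g2] conj_id[OF uc(1) _ u2] C by (simp add: u_def w_def)
  have P0: "(u \<otimes> v) \<otimes> x3 = x3 \<otimes> (u \<otimes> v)" using h[OF assms(12)] C P by simp
  have P2: "(u \<otimes> v) \<otimes> g2 = g2 \<otimes> (u \<otimes> v)" by (rule L1[OF _ _ _ P0]) (use h[OF assms(11)] C P uc in simp_all)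
  have P3: "(u \<otimes> v) \<otimes> g3 = g3 \<otimes> (u \<otimes> v)" by (rule L1[OF _ _ _ P0]) (use h[OF assms(13)] C P uc in simp_all)
  have v2: "v \<otimes> g2 = g2 \<otimes> v" using cw_right[OF uc(1,2) _ u2 P2] C by simp
  have v3: "v \<otimes> g3 = g3 \<otimes> v" using cw_right[OF uc(1,2) _ u3 P3] C by simp
  have Q0: "(w \<otimes> u) \<otimes> x3 = x3 \<otimes> (w \<otimes> u)" using h[OF assms(16)] C Q by simp
  have Q1: "(w \<otimes> u) \<otimes> g1 = g1 \<otimes> (w \<otimes> u)" by (rule L1[OF _ _ _ Q0]) (use h[OF assms(15)] C Q uc in simp_all)
  have Q3: "(w \<otimes> u) \<otimes> g3 = g3 \<otimes> (w \<otimes> u)" by (rule L1[OF _ _ _ Q0]) (use h[OF assms(18)] C Q uc in simp_all)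
  have R: "comm G (x1 \<otimes> g1) (x2 \<otimes> g2) = (w \<otimes> u) \<otimes> (comm G g1 g2 \<otimes> v)"
  proof -
    have "comm G (x1 \<otimes> g1) (x2 \<otimes> g2) = (inv g1 \<otimes> (w \<otimes> u) \<otimes> g1) \<otimes> comm G g1 (x2 \<otimes> g2)"
      using L2[of x1 "x2 \<otimes> g2" g1] C Q by simp
    also have "inv g1 \<otimes> (w \<otimes> u) \<otimes> g1 = w \<otimes> u" using conj_id[OF _ _ Q1] C uc by simp
    also have "comm G g1 (x2 \<otimes> g2) = comm G g1 g2 \<otimes> v"
      using L3[of g1 x2 g2] conj_id[OF uc(2) _ v2] C by (simp add: v_def)
    finally show ?thesis .
  qed
  have R0: "((w \<otimes> u) \<otimes> (comm G g1 g2 \<otimes> v)) \<otimes> x3 = x3 \<otimes> ((w \<otimes> u) \<otimes> (comm G g1 g2 \<otimes> v))"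
    using h[OF assms(10)] C R by simp
  have R3: "((w \<otimes> u) \<otimes> (comm G g1 g2 \<otimes> v)) \<otimes> g3 = g3 \<otimes> ((w \<otimes> u) \<otimes> (comm G g1 g2 \<otimes> v))"
    by (rule L1[OF _ _ _ R0]) (use h[OF assms(9)] C R uc in simp_all)
  have "(comm G g1 g2 \<otimes> v) \<otimes> g3 = g3 \<otimes> (comm G g1 g2 \<otimes> v)"
    using cw_right[OF _ _ _ Q3 R3] C uc by simp
  then have "comm G g1 g2 \<otimes> g3 = g3 \<otimes> comm G g1 g2"
    using cw_left[OF _ _ _ v3] C uc by simp
  then show ?thesis using c3 C by simp
qed

end
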